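(* Let $G$ be a fullerene graph, $C$ a longest cycle of $G$, and apply the discharging procedure described in the context. If $f=v_1v_2v_3v_4v_5v_6$ is a white face of $G$ such that the edges $v_4v_5$, $v_5v_6$ and $v_6v_1$ are contained in $C$, then the final amount of charge of $f$ is $1$ unit.
   Context: A fullerene graph is a cubic, planar, $3$-connected graph embedded in the plane in which every face has size five or six. Fix a longest cycle $C$ of $G$; vertices on $C$ are black, the others white. Every face of $G$ is incident with at most two white vertices. A face incident with exactly two white vertices is called white; a face incident with no white vertex is called black. For a face $f$ with vertices $v_1,\dots,v_k$ in cyclic order, $f_{i,i+1}$ denotes the face other than $f$ containing the edge $v_iv_{i+1}$ (indices modulo $k$). Discharging: each white vertex receives $3$ units of charge and sends $1$ unit to each of its three incident faces (so each face initially has charge equal to its number of incident white vertices). Then charge is redistributed by two rules, where $f_0=v_1\dots v_6$ is a black face of size six and indices are modulo $6$. Rule A: $f_0$ receives $1/2$ unit from $f_{i,i+1}$ if the path $v_{i-1}v_iv_{i+1}v_{i+2}$ is contained in $C$ and the face $f_{i,i+1}$ is white. Rule B: $f_0$ receives $1$ unit from $f_{i,i+1}$ if the edge $v_iv_{i+1}$ is contained in $C$, neither $v_{i-1}v_i$ nor $v_{i+1}v_{i+2}$ is contained in $C$, and the face $f_{i,i+1}$ is white. The final charge of a face is its initial charge plus all charge received minus all charge sent under Rules A and B. *)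

theory Defs
  imports Complex_Main
begin

text \<open>A graph is given by a vertex set V and a symmetric set E of directed pairs
(each undirected edge uv appears as (u,v) and (v,u), the darts).  A plane embedding
is given by a rotation system rot: rot v cyclically permutes the neighbours of v.
Faces are the orbits of the face-tracing permutation on darts; the embedding is
planar (spherical) iff Euler's formula holds for the connected graph.\<close>

definition nbrs :: "('a \<times> 'a) set \<Rightarrow> 'a \<Rightarrow> 'a set" where
  "nbrs E v = {u. (v, u) \<in> E}"

definition simple_graph :: "'a set \<Rightarrow> ('a \<times> 'a) set \<Rightarrow> bool" where
  "simple_graph V E \<longleftrightarrow> finite V \<and> E \<subseteq> V \<times> V \<and> sym E \<and> (\<forall>v. (v, v) \<notin> E)"

definition connected_set :: "('a \<times> 'a) set \<Rightarrow> 'a set \<Rightarrow> bool" where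
  "connected_set E W \<longleftrightarrow> (\<forall>u\<in>W. \<forall>v\<in>W. (u, v) \<in> (E \<inter> (W \<times> W))\<^sup>*)"

definition three_connected :: "'a set \<Rightarrow> ('a \<times> 'a) set \<Rightarrow> bool" where
  "three_connected V E \<longleftrightarrow> card V \<ge> 4 \<and>
     (\<forall>S. S \<subseteq> V \<longrightarrow> card S < 3 \<longrightarrow> connected_set E (V - S))"

definition cubic :: "'a set \<Rightarrow> ('a \<times> 'a) set \<Rightarrow> bool" where
  "cubic V E \<longleftrightarrow> (\<forall>v\<in>V. card (nbrs E v) = 3)"

definition rotation_system :: "'a set \<Rightarrow> ('a \<times> 'a) set \<Rightarrow> ('a \<Rightarrow> 'a \<Rightarrow> 'a) \<Rightarrow> bool" where
  "rotation_system V E rot \<longleftrightarrow>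
     (\<forall>v\<in>V. bij_betw (rot v) (nbrs E v) (nbrs E v) \<and>
        (\<forall>u\<in>nbrs E v. \<forall>w\<in>nbrs E v. \<exists>k. (rot v ^^ k) u = w))"

definition phi :: "('a \<Rightarrow> 'a \<Rightarrow> 'a) \<Rightarrow> 'a \<times> 'a \<Rightarrow> 'a \<times> 'a" where
  "phi rot d = (snd d, rot (snd d) (fst d))"

definition face_of :: "('a \<Rightarrow> 'a \<Rightarrow> 'a) \<Rightarrow> 'a \<times> 'a \<Rightarrow> ('a \<times> 'a) set" where
  "face_of rot d = {(phi rot ^^ k) d | k. True}"

definition faces :: "('a \<times> 'a) set \<Rightarrow> ('a \<Rightarrow> 'a \<Rightarrow> 'a) \<Rightarrow> ('a \<times> 'a) set set" where
  "faces E rot = face_of rot ` E"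

definition face_vertices :: "('a \<times> 'a) set \<Rightarrow> 'a set" where
  "face_vertices f = fst ` f"

definition plane_graph :: "'a set \<Rightarrow> ('a \<times> 'a) set \<Rightarrow> ('a \<Rightarrow> 'a \<Rightarrow> 'a) \<Rightarrow> bool" where
  "plane_graph V E rot \<longleftrightarrow> simple_graph V E \<and> connected_set E V \<and> rotation_system V E rot \<and>
     int (card V) - int (card E) div 2 + int (card (faces E rot)) = 2"

text \<open>Fullerene: cubic, plane, 3-connected, every face of size five or six
(the size of a face is the length of its boundary walk = number of its darts).\<close>
definition fullerene :: "'a set \<Rightarrow> ('a \<times> 'a) set \<Rightarrow> ('a \<Rightarrow> 'a \<Rightarrow> 'a) \<Rightarrow> bool" where
  "fullerene V E rot \<longleftrightarrow> plane_graph V E rot \<and> cubic V E \<and> three_connected V E \<and>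
     (\<forall>f\<in>faces E rot. card f = 5 \<or> card f = 6)"

definition is_cycle :: "'a set \<Rightarrow> ('a \<times> 'a) set \<Rightarrow> 'a list \<Rightarrow> bool" where
  "is_cycle V E cs \<longleftrightarrow> length cs \<ge> 3 \<and> distinct cs \<and> set cs \<subseteq> V \<and>
     (\<forall>i<length cs. (cs ! i, cs ! ((i + 1) mod length cs)) \<in> E)"

definition longest_cycle :: "'a set \<Rightarrow> ('a \<times> 'a) set \<Rightarrow> 'a list \<Rightarrow> bool" where
  "longest_cycle V E cs \<longleftrightarrow> is_cycle V E cs \<and> (\<forall>ds. is_cycle V E ds \<longrightarrow> length ds \<le> length cs)"

definition in_C :: "'a list \<Rightarrow> 'a \<times> 'a \<Rightarrow> bool" where
  "in_C cs d \<longleftrightarrow> (\<exists>i<length cs.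
      (cs ! i = fst d \<and> cs ! ((i + 1) mod length cs) = snd d) \<or>
      (cs ! i = snd d \<and> cs ! ((i + 1) mod length cs) = fst d))"

definition white_count :: "'a list \<Rightarrow> ('a \<times> 'a) set \<Rightarrow> nat" where
  "white_count cs f = card {v \<in> face_vertices f. v \<notin> set cs}"

definition white_face :: "'a list \<Rightarrow> ('a \<times> 'a) set \<Rightarrow> bool" where
  "white_face cs f \<longleftrightarrow> white_count cs f = 2"

definition black_face :: "'a list \<Rightarrow> ('a \<times> 'a) set \<Rightarrow> bool" where
  "black_face cs f \<longleftrightarrow> white_count cs f = 0"

text \<open>Amount that the black hexagonal face f0 receives from face g by Rules A and B.
For a dart d = (v_i, v_(i+1)) of f0, the previous dart is (v_(i-1), v_i) = phi^5 d
(f0 has six darts) and the next dart is (v_(i+1), v_(i+2)) = phi d; the face f_(i,i+1)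
is the face of the reversed dart (v_(i+1), v_i).\<close>
definition recv :: "('a \<Rightarrow> 'a \<Rightarrow> 'a) \<Rightarrow> 'a list \<Rightarrow> ('a \<times> 'a) set \<Rightarrow> ('a \<times> 'a) set \<Rightarrow> real" where
  "recv rot cs f0 g =
     (if black_face cs f0 \<and> card f0 = 6 then
        (\<Sum>d\<in>f0.
           let prv = (phi rot ^^ 5) d; nxt = phi rot d in
           if face_of rot (snd d, fst d) = g \<and> white_face cs g then
             (if in_C cs prv \<and> in_C cs d \<and> in_C cs nxt then 1/2 else 0) +
             (if in_C cs d \<and> \<not> in_C cs prv \<and> \<not> in_C cs nxt then 1 else 0)
           else 0)
      else 0)"

definition final_charge ::
  "('a \<times> 'a) set \<Rightarrow> ('a \<Rightarrow> 'a \<Rightarrow> 'a) \<Rightarrow> 'a list \<Rightarrow> ('a \<times> 'a) set \<Rightarrow> real" where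
  "final_charge E rot cs g =
     real (white_count cs g) + (\<Sum>h\<in>faces E rot. recv rot cs g h)
       - (\<Sum>h\<in>faces E rot. recv rot cs h g)"

end

theory Submission
  imports Defs
begin


definition pe :: "'a list \<Rightarrow> ('a \<times> 'a) set" where
  "pe xs = set (zip xs (tl xs))"

definition cedges :: "'a list \<Rightarrow> ('a \<times> 'a) set" where
  "cedges xs = pe xs \<union> {(last xs, hd xs)}"

lemma pe_nth: "pe xs = {(xs!i, xs!(Suc i)) | i. Suc i < length xs}"
  unfolding pe_def set_zip by (auto simp: nth_tl)

lemma cedges_nth:
  assumes "xs \<noteq> []"
  shows "cedges xs = {(xs!i, xs!((i+1) mod length xs)) | i. i < length xs}"
proof -
  let ?n = "length xs"
  have n: "?n > 0" using assms by simp
  show ?thesis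
  proof (rule set_eqI, rule iffI)
    fix e assume "e \<in> cedges xs"
    then consider "e \<in> pe xs" | "e = (last xs, hd xs)" unfolding cedges_def by auto
    then show "e \<in> {(xs!i, xs!((i+1) mod ?n)) | i. i < ?n}"
    proof cases
      case 1 then obtain i where "Suc i < ?n" "e = (xs!i, xs!Suc i)" by (auto simp: pe_nth)
      then show ?thesis by (intro CollectI exI[of _ i]) auto
    next
      case 2 then show ?thesis using n assms
        by (intro CollectI exI[of _ "?n - 1"]) (auto simp: last_conv_nth hd_conv_nth)
    qed
  next
    fix e assume "e \<in> {(xs!i, xs!((i+1) mod ?n)) | i. i < ?n}"
    then obtain i where i: "i < ?n" "e = (xs!i, xs!((i+1) mod ?n))" by auto
    show "e \<in> cedges xs"
    proof (cases "Suc i < ?n")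
      case True then show ?thesis using i unfolding cedges_def pe_nth by auto
    next
      case False then have "i = ?n - 1" using i by auto
      then show ?thesis using i n assms unfolding cedges_def
        by (auto simp: last_conv_nth hd_conv_nth)
    qed
  qed
qed

lemma is_cycle_iff:
  "is_cycle V E cs \<longleftrightarrow> 3 \<le> length cs \<and> distinct cs \<and> set cs \<subseteq> V \<and> cedges cs \<subseteq> E"
proof -
  have "cs \<noteq> []" if "3 \<le> length cs" using that by auto
  then show ?thesis unfolding is_cycle_def
    by (auto simp: cedges_nth) blast
qed

lemma in_C_iff:
  assumes "cs \<noteq> []"
  shows "in_C cs (a,b) \<longleftrightarrow> (a,b) \<in> cedges cs \<or> (b,a) \<in> cedges cs"
  unfolding in_C_def cedges_nth[OF assms] by auto

lemma in_C_sym: "in_C cs (a,b) \<longleftrightarrow> in_C cs (b,a)"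
  unfolding in_C_def by auto

lemma pe_Cons: "xs \<noteq> [] \<Longrightarrow> pe (a # xs) = insert (a, hd xs) (pe xs)"
  unfolding pe_def by (cases xs) auto

lemma pe_single[simp]: "pe [a] = {}" unfolding pe_def by simp
lemma pe_Nil[simp]: "pe [] = {}" unfolding pe_def by simp

lemma pe_append: "pe (xs @ y # ys) = pe (xs @ [y]) \<union> pe (y # ys)"
proof (induction xs)
  case Nil then show ?case by simp
next
  case (Cons a xs) then show ?case
    by (cases xs) (auto simp: pe_Cons)
qed

lemma pe_snoc: "xs \<noteq> [] \<Longrightarrow> pe (xs @ [a]) = pe xs \<union> {(last xs, a)}"
proof (induction xs)
  case Nil then show ?case by simp
next
  case (Cons b xs) then show ?case
    by (cases xs) (auto simp: pe_Cons)
qed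

lemma cedges_rotate1:
  assumes "xs \<noteq> []" shows "cedges (rotate1 xs) = cedges xs"
proof -
  obtain a r where xs: "xs = a # r" using assms by (cases xs) auto
  show ?thesis
  proof (cases r)
    case Nil then show ?thesis using xs by simp
  next
    case (Cons b r')
    have "pe (r @ [a]) = pe r \<union> {(last r, a)}"
      unfolding pe_def using Cons
      by (induction r arbitrary: b r' rule: induct_list012) auto
    moreover have "pe (a # r) = insert (a, hd r) (pe r)" unfolding pe_def using Cons by auto
    ultimately show ?thesis using xs Cons unfolding cedges_def by auto
  qed
qed

lemma cedges_rotate:
  assumes "xs \<noteq> []" shows "cedges (rotate k xs) = cedges xs"
  using assms by (induction k) (auto simp: cedges_rotate1)

lemma pe_rev: "pe (rev xs) = converse (pe xs)"
proof (induction xs)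
  case Nil then show ?case by simp
next
  case (Cons a xs)
  show ?case
  proof (cases "xs = []")
    case True then show ?thesis by simp
  next
    case False
    have "pe (rev (a # xs)) = pe (rev xs @ [a])" by simp
    also have "\<dots> = pe (rev xs) \<union> {(hd xs, a)}" using False by (simp add: pe_snoc last_rev)
    finally show ?thesis using Cons False by (auto simp: pe_Cons)
  qed
qed

lemma cedges_rev:
  assumes "xs \<noteq> []" shows "cedges (rev xs) = converse (cedges xs)"
  using assms unfolding cedges_def by (auto simp: pe_rev hd_rev last_rev)


lemma succ_idx: "i < (n::nat) \<Longrightarrow> (i+1) mod n = (if i+1 < n then i+1 else 0)"
proof (cases "i+1 < n")
  case False
  assume "i < n" then have "i + 1 = n" using False by simp
  then show ?thesis by simp
qed simp

lemma pred_idx: "i < (n::nat) \<Longrightarrow> (i+n-1) mod n = (if i = 0 then n-1 else i-1)"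
proof (cases "i = 0")
  case False
  assume "i < n"
  then have "i + n - 1 = (i - 1) + n" using False by simp
  then show ?thesis using False \<open>i<n\<close> by (metis less_imp_diff_less mod_add_self2 mod_less)
qed simp

lemma mod_lt3: "3 \<le> (n::nat) \<Longrightarrow> k mod n < n"
  by (metis gr0I mod_less_divisor not_numeral_le_zero)

lemma cyc_nonempty: "is_cycle V E cs \<Longrightarrow> cs \<noteq> []"
  unfolding is_cycle_def by auto

lemma in_C_nth:
  assumes cyc: "is_cycle V E cs" and i: "i < length cs"
  shows "in_C cs (cs!i, w) \<longleftrightarrow> w = cs!((i+1) mod length cs) \<or> w = cs!((i+length cs-1) mod length cs)"
proof -
  let ?n = "length cs"
  have d: "distinct cs" and n3: "3 \<le> ?n" using cyc unfolding is_cycle_def by auto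
  have eq: "cs!j = cs!i \<longleftrightarrow> j = i" if "j < ?n" for j
    using d that i by (simp add: nth_eq_iff_index_eq)
  have key: "(j+1) mod ?n = i \<longleftrightarrow> j = (i+?n-1) mod ?n" if "j < ?n" for j
    using that i n3 unfolding succ_idx[OF that] pred_idx[OF i] by auto
  show ?thesis
  proof
    assume "in_C cs (cs!i, w)"
    then obtain j where j: "j < ?n" and disj:
      "(cs!j = cs!i \<and> cs!((j+1) mod ?n) = w) \<or> (cs!j = w \<and> cs!((j+1) mod ?n) = cs!i)"
      unfolding in_C_def by auto
    have mlt: "(j+1) mod ?n < ?n" using n3 by (rule mod_lt3)
    then consider "j = i" "cs!((j+1) mod ?n) = w" | "cs!j = w" "(j+1) mod ?n = i"
      using disj eq[OF j] eq[OF mlt] by auto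
    then show "w = cs!((i+1) mod ?n) \<or> w = cs!((i+?n-1) mod ?n)"
      by cases (use key[OF j] in auto)
  next
    assume "w = cs!((i+1) mod ?n) \<or> w = cs!((i+?n-1) mod ?n)"
    then show "in_C cs (cs!i, w)"
    proof
      assume "w = cs!((i+1) mod ?n)"
      then show ?thesis unfolding in_C_def using i by auto
    next
      assume w: "w = cs!((i+?n-1) mod ?n)"
      let ?j = "(i+?n-1) mod ?n"
      have "?j < ?n" using n3 by (rule mod_lt3)
      moreover have "(?j + 1) mod ?n = i" using key[OF \<open>?j < ?n\<close>] by simp
      ultimately show ?thesis unfolding in_C_def using w by (intro exI[of _ ?j]) auto
    qed
  qed
qed

lemma in_C_set: "in_C cs (a,b) \<Longrightarrow> a \<in> set cs \<and> b \<in> set cs"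
proof -
  assume "in_C cs (a,b)"
  then obtain i where "i < length cs" "(cs!i = a \<and> cs!((i+1) mod length cs) = b) \<or> (cs!i = b \<and> cs!((i+1) mod length cs) = a)"
    unfolding in_C_def by auto
  moreover have "(i+1) mod length cs < length cs" using \<open>i < length cs\<close>
    by (metis gr_implies_not0 mod_less_divisor neq0_conv)
  ultimately show ?thesis by (metis fst_conv nth_mem snd_conv)
qed

lemma in_C_E: "is_cycle V E cs \<Longrightarrow> in_C cs (a,b) \<Longrightarrow> sym E \<Longrightarrow> (a,b) \<in> E"
  unfolding in_C_def is_cycle_def by (auto dest: symD)

lemma in_C_two:
  assumes cyc: "is_cycle V E cs" and u: "u \<in> set cs"
  shows "\<exists>w1 w2. w1 \<noteq> w2 \<and> in_C cs (u,w1) \<and> in_C cs (u,w2)"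
proof -
  let ?n = "length cs"
  obtain i where i: "i < ?n" "u = cs!i" using u by (auto simp: in_set_conv_nth)
  have d: "distinct cs" and n3: "3 \<le> ?n" using cyc unfolding is_cycle_def by auto
  have ne: "(i+1) mod ?n \<noteq> (i+?n-1) mod ?n"
    using i n3 unfolding succ_idx[OF i(1)] pred_idx[OF i(1)] by auto
  have "(i+1) mod ?n < ?n" "(i+?n-1) mod ?n < ?n" using n3 by (rule mod_lt3)+
  then have "cs!((i+1) mod ?n) \<noteq> cs!((i+?n-1) mod ?n)"
    using d ne by (simp add: nth_eq_iff_index_eq)
  then show ?thesis using in_C_nth[OF cyc i(1)] i by blast
qed

lemma in_C_three:
  assumes cyc: "is_cycle V E cs"
    and "in_C cs (u,a)" "in_C cs (u,b)" "in_C cs (u,c)"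
    and "a \<noteq> b" "a \<noteq> c" "b \<noteq> c"
  shows False
proof -
  let ?n = "length cs"
  have "u \<in> set cs" using assms(2) in_C_set by fast
  then obtain i where i: "i < ?n" "u = cs!i" by (auto simp: in_set_conv_nth)
  show False using assms(2-) unfolding i(2) in_C_nth[OF cyc i(1)] by auto
qed

lemma deg2:
  assumes cyc: "is_cycle V E cs" and sE: "sym E"
    and u: "u \<in> set cs" and c3: "card (nbrs E u) = 3"
    and a: "a \<in> nbrs E u" "a \<notin> set cs" and b: "b \<in> nbrs E u" "b \<noteq> a"
  shows "in_C cs (u,b)"
proof -
  obtain w1 w2 where w: "w1 \<noteq> w2" "in_C cs (u,w1)" "in_C cs (u,w2)"
    using in_C_two[OF cyc u] by blast
  have "w1 \<in> nbrs E u" "w2 \<in> nbrs E u" using w in_C_E[OF cyc _ sE] unfolding nbrs_def by auto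
  moreover have "w1 \<in> set cs" "w2 \<in> set cs" using w in_C_set by fast+
  ultimately have sub: "{a,w1,w2} \<subseteq> nbrs E u" and cd: "card {a,w1,w2} = 3"
    using a w by auto (metis card_3_iff)
  have "finite (nbrs E u)" using c3 card.infinite by fastforce
  then have "{a,w1,w2} = nbrs E u" using sub cd c3 by (metis card_subset_eq)
  then show ?thesis using b w by auto
qed




lemma cyc_rotate: "is_cycle V E cs \<Longrightarrow> is_cycle V E (rotate k cs)"
  using cyc_nonempty[of V E cs] unfolding is_cycle_iff by (simp add: cedges_rotate)

lemma cyc_rev: "sym E \<Longrightarrow> is_cycle V E cs \<Longrightarrow> is_cycle V E (rev cs)"
  using cyc_nonempty[of V E cs] unfolding is_cycle_iff
  by (auto simp: cedges_rev dest: symD)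

lemma in_C_rotate: "cs \<noteq> [] \<Longrightarrow> in_C (rotate k cs) (a,b) = in_C cs (a,b)"
  by (simp add: in_C_iff cedges_rotate)

lemma in_C_rev: "cs \<noteq> [] \<Longrightarrow> in_C (rev cs) (a,b) = in_C cs (a,b)"
  by (auto simp add: in_C_iff cedges_rev)

lemma pe_split: "(a,b) \<in> pe xs \<Longrightarrow> \<exists>us vs. xs = us @ a # b # vs"
proof (induction xs)
  case Nil then show ?case by simp
next
  case (Cons x xs)
  show ?case
  proof (cases "xs = []")
    case True then show ?thesis using Cons by simp
  next
    case False
    then have "(a,b) = (x, hd xs) \<or> (a,b) \<in> pe xs" using Cons.prems by (simp add: pe_Cons)
    then show ?thesis
    proof
      assume "(a,b) = (x, hd xs)"
      then show ?thesis using False by (intro exI[of _ "[]"] exI[of _ "tl xs"]) auto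
    next
      assume "(a,b) \<in> pe xs"
      then obtain us vs where "xs = us @ a # b # vs" using Cons.IH by blast
      then show ?thesis by (intro exI[of _ "x # us"] exI[of _ vs]) auto
    qed
  qed
qed

definition same_cyc :: "'a set \<Rightarrow> ('a \<times> 'a) set \<Rightarrow> 'a list \<Rightarrow> 'a list \<Rightarrow> bool" where
  "same_cyc V E cs cs' \<longleftrightarrow> is_cycle V E cs' \<and> length cs' = length cs \<and> set cs' = set cs \<and>
     (\<forall>x y. in_C cs' (x,y) = in_C cs (x,y))"

lemma same_cyc_rotate: "is_cycle V E cs \<Longrightarrow> same_cyc V E cs (rotate k cs)"
  unfolding same_cyc_def using cyc_nonempty[of V E cs]
  by (simp add: cyc_rotate in_C_rotate)

lemma same_cyc_rev: "sym E \<Longrightarrow> is_cycle V E cs \<Longrightarrow> same_cyc V E cs (rev cs)"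
  unfolding same_cyc_def using cyc_nonempty[of V E cs]
  by (simp add: cyc_rev in_C_rev)

lemma same_cyc_trans: "same_cyc V E a b \<Longrightarrow> same_cyc V E b c \<Longrightarrow> same_cyc V E a c"
  unfolding same_cyc_def by auto

lemma norm_front:
  assumes cyc: "is_cycle V E ys" and e: "(a,b) \<in> cedges ys"
  shows "\<exists>cs'. same_cyc V E ys cs' \<and> (\<exists>r. cs' = a # b # r)"
proof -
  have n3: "3 \<le> length ys" using cyc unfolding is_cycle_def by auto
  from e consider "(a,b) \<in> pe ys" | "a = last ys" "b = hd ys" unfolding cedges_def by auto
  then show ?thesis
  proof cases
    case 1
    obtain us vs where ys: "ys = us @ a # b # vs" using pe_split[OF 1] by blast
    have "rotate (length us) ys = a # b # vs @ us" unfolding ys by (simp add: rotate_append)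
    then show ?thesis using same_cyc_rotate[OF cyc, of "length us"]
      by (intro exI[of _ "rotate (length us) ys"] conjI exI[of _ "vs @ us"]) simp_all
  next
    case 2
    define m where "m = butlast ys"
    have ysne: "ys \<noteq> []" using n3 by auto
    have ys: "ys = m @ [a]" unfolding m_def 2(1) using ysne by simp
    have mne: "m \<noteq> []" using n3 ys by auto
    have "hd m = hd ys" using ys mne by simp
    then have "hd m = b" using 2(2) by simp
    then have m: "m = b # tl m" using mne by (metis list.collapse)
    have "rotate (length m) ys = [a] @ m" unfolding ys by (rule rotate_append)
    then have "rotate (length m) ys = a # b # tl m" using m by simp
    then show ?thesis using same_cyc_rotate[OF cyc, of "length m"]
      by (intro exI[of _ "rotate (length m) ys"] conjI exI[of _ "tl m"]) simp_all
  qed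
qed

lemma norm:
  assumes cyc: "is_cycle V E cs" and sE: "sym E" and e: "in_C cs (a,b)"
  shows "\<exists>cs'. same_cyc V E cs cs' \<and> (\<exists>r. cs' = a # b # r)"
proof -
  have ne: "cs \<noteq> []" using cyc_nonempty[OF cyc] .
  from e consider "(a,b) \<in> cedges cs" | "(b,a) \<in> cedges cs" using in_C_iff[OF ne] by auto
  then show ?thesis
  proof cases
    case 1 then show ?thesis using norm_front[OF cyc] by blast
  next
    case 2
    then have "(a,b) \<in> cedges (rev cs)" using cedges_rev[OF ne] by auto
    then obtain cs' where "same_cyc V E (rev cs) cs'" "\<exists>r. cs' = a # b # r"
      using norm_front[OF cyc_rev[OF sE cyc]] by blast
    then show ?thesis using same_cyc_trans[OF same_cyc_rev[OF sE cyc]] by blast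
  qed
qed

lemma replace_cycle:
  assumes cyc: "is_cycle V E (p # old @ q # rest)"
    and dm: "distinct mid" and mV: "set mid \<subseteq> V"
    and disj: "set mid \<inter> set (p # q # rest) = {}"
    and pth: "pe (p # mid @ [q]) \<subseteq> E"
    and len: "length old \<le> length mid"
  shows "is_cycle V E (p # mid @ q # rest)"
proof -
  have c: "3 \<le> length (p # old @ q # rest)" "distinct (p # old @ q # rest)"
     "set (p # old @ q # rest) \<subseteq> V" "cedges (p # old @ q # rest) \<subseteq> E"
    using cyc unfolding is_cycle_iff by auto
  have pe1: "pe ((p # old) @ q # rest) = pe ((p # old) @ [q]) \<union> pe (q # rest)" by (rule pe_append)
  have pe2: "pe ((p # mid) @ q # rest) = pe ((p # mid) @ [q]) \<union> pe (q # rest)" by (rule pe_append)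
  have l: "last (p # mid @ q # rest) = last (p # old @ q # rest)" by simp
  have "cedges (p # mid @ q # rest) \<subseteq> E"
    using c(4) pe1 pe2 pth l unfolding cedges_def by auto
  moreover have "3 \<le> length (p # mid @ q # rest)" using c(1) len by simp
  moreover have "distinct (p # mid @ q # rest)" using c(2) dm disj by auto
  moreover have "set (p # mid @ q # rest) \<subseteq> V" using c(3) mV by auto
  ultimately show ?thesis unfolding is_cycle_iff by blast
qed

lemma REP:
  assumes lc: "longest_cycle V E (p # old @ q # rest)"
    and dm: "distinct mid" and mV: "set mid \<subseteq> V"
    and disj: "set mid \<inter> set (p # q # rest) = {}"
    and pth: "pe (p # mid @ [q]) \<subseteq> E"
    and len: "length old < length mid"
  shows False
proof -
  have "is_cycle V E (p # mid @ q # rest)"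
    using replace_cycle[OF _ dm mV disj pth] lc len unfolding longest_cycle_def by auto
  then have "length (p # mid @ q # rest) \<le> length (p # old @ q # rest)"
    using lc unfolding longest_cycle_def by blast
  then show False using len by simp
qed

lemma longest_same: "longest_cycle V E cs \<Longrightarrow> same_cyc V E cs cs' \<Longrightarrow> longest_cycle V E cs'"
  unfolding longest_cycle_def same_cyc_def by auto

lemma R1:
  assumes lc: "longest_cycle V E cs" and sE: "sym E" and e: "in_C cs (p,q)"
    and ne: "mid \<noteq> []" and dm: "distinct mid" and mV: "set mid \<subseteq> V"
    and disj: "set mid \<inter> set cs = {}" and pth: "pe (p # mid @ [q]) \<subseteq> E"
  shows False
proof -
  have cyc: "is_cycle V E cs" using lc unfolding longest_cycle_def by auto
  obtain cs' r where s: "same_cyc V E cs cs'" and cs': "cs' = p # q # r" using norm[OF cyc sE e] by blast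
  have lc': "longest_cycle V E (p # [] @ q # r)" using longest_same[OF lc s] cs' by simp
  show False
    by (rule REP[OF lc' dm mV _ pth]) (use disj s cs' ne in \<open>auto simp: same_cyc_def\<close>)
qed

lemma R2:
  assumes lc: "longest_cycle V E cs" and sE: "sym E"
    and e1: "in_C cs (p,t)" and e2: "in_C cs (t,q)" and pq: "p \<noteq> q"
    and ne: "2 \<le> length mid" and dm: "distinct mid" and mV: "set mid \<subseteq> V"
    and disj: "set mid \<inter> set cs \<subseteq> {t}" and pth: "pe (p # mid @ [q]) \<subseteq> E"
  shows False
proof -
  have cyc: "is_cycle V E cs" using lc unfolding longest_cycle_def by auto
  obtain cs' r where s: "same_cyc V E cs cs'" and cs': "cs' = p # t # r" using norm[OF cyc sE e1] by blast
  have cyc': "is_cycle V E cs'" using s unfolding same_cyc_def by auto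
  have n3: "3 \<le> length cs'" using cyc' unfolding is_cycle_def by auto
  have "in_C cs' (t,q)" using s e2 unfolding same_cyc_def by auto
  then have "q = cs'!((1+1) mod length cs') \<or> q = cs'!((1+length cs'-1) mod length cs')"
    using in_C_nth[OF cyc', of 1 q] n3 cs' by auto
  moreover have "(1+length cs'-1) mod length cs' = 0" by simp
  moreover have "(1+1) mod length cs' = 2" using n3 by simp
  ultimately have "q = cs'!2" using pq cs' by auto
  then obtain r' where r: "r = q # r'" using n3 cs' by (cases r) auto
  have lc': "longest_cycle V E (p # [t] @ q # r')" using longest_same[OF lc s] cs' r by simp
  have "distinct cs'" using cyc' unfolding is_cycle_def by auto
  then have "t \<notin> set (p # q # r')" using cs' r by auto
  then have "set mid \<inter> set (p # q # r') = {}"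
    using disj s cs' r unfolding same_cyc_def by auto
  then show False
    by (rule REP[OF lc' dm mV _ pth]) (use ne in simp)
qed



definition GC :: "'a set \<Rightarrow> ('a \<times> 'a) set \<Rightarrow> ('a \<Rightarrow> 'a \<Rightarrow> 'a) \<Rightarrow> bool" where
  "GC V E rot \<longleftrightarrow> simple_graph V E \<and> rotation_system V E rot \<and> cubic V E"

lemma fullerene_GC: "fullerene V E rot \<Longrightarrow> GC V E rot"
  unfolding fullerene_def plane_graph_def GC_def by auto

context
  fixes V E rot assumes gc: "GC V E rot"
begin

lemma sE: "sym E" using gc unfolding GC_def simple_graph_def by auto
lemma EV: "(a,b) \<in> E \<Longrightarrow> a \<in> V \<and> b \<in> V" using gc unfolding GC_def simple_graph_def by auto
lemma noloop: "(a,a) \<notin> E" using gc unfolding GC_def simple_graph_def by auto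
lemma finV: "finite V" using gc unfolding GC_def simple_graph_def by auto
lemma finE: "finite E"
proof -
  have "E \<subseteq> V \<times> V" using gc unfolding GC_def simple_graph_def by auto
  then show ?thesis using finV finite_subset by blast
qed
lemma c3: "v \<in> V \<Longrightarrow> card (nbrs E v) = 3" using gc unfolding GC_def cubic_def by auto
lemma nbrs_iff: "a \<in> nbrs E v \<longleftrightarrow> (v,a) \<in> E" unfolding nbrs_def by simp
lemma Esym: "(a,b) \<in> E \<Longrightarrow> (b,a) \<in> E" using sE by (auto dest: symD)

lemma rot_bij: "v \<in> V \<Longrightarrow> bij_betw (rot v) (nbrs E v) (nbrs E v)"
  using gc unfolding GC_def rotation_system_def by auto
lemma rot_trans: "v \<in> V \<Longrightarrow> u \<in> nbrs E v \<Longrightarrow> w \<in> nbrs E v \<Longrightarrow> \<exists>k. (rot v ^^ k) u = w"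
  using gc unfolding GC_def rotation_system_def by auto

lemma rot_in: "v \<in> V \<Longrightarrow> a \<in> nbrs E v \<Longrightarrow> rot v a \<in> nbrs E v"
  using rot_bij bij_betwE by blast
lemma rot_inj: "v \<in> V \<Longrightarrow> a \<in> nbrs E v \<Longrightarrow> b \<in> nbrs E v \<Longrightarrow> rot v a = rot v b \<Longrightarrow> a = b"
  using rot_bij bij_betw_imp_inj_on inj_onD by metis

lemma rot_nofix:
  assumes v: "v \<in> V" and a: "a \<in> nbrs E v" shows "rot v a \<noteq> a"
proof
  assume fx: "rot v a = a"
  have "(rot v ^^ k) a = a" for k by (induction k) (auto simp: fx)
  then have "nbrs E v \<subseteq> {a}" using rot_trans[OF v a] by auto
  then have "card (nbrs E v) \<le> card {a}" by (intro card_mono) auto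
  then have "card (nbrs E v) \<le> 1" by simp
  then show False using c3[OF v] by simp
qed

lemma rot_no2:
  assumes v: "v \<in> V" and a: "a \<in> nbrs E v" shows "rot v (rot v a) \<noteq> a"
proof
  assume fx: "rot v (rot v a) = a"
  have "(rot v ^^ k) a \<in> {a, rot v a}" for k by (induction k) (auto simp: fx)
  then have "nbrs E v \<subseteq> {a, rot v a}" using rot_trans[OF v a] by blast
  then have "card (nbrs E v) \<le> card {a, rot v a}" by (intro card_mono) auto
  moreover have "card {a, rot v a} \<le> 2" by (cases "a = rot v a") auto
  ultimately have "card (nbrs E v) \<le> 2" by linarith
  then show False using c3[OF v] by simp
qed

lemma rot_nbrs:
  assumes v: "v \<in> V" and a: "a \<in> nbrs E v"
  shows "nbrs E v = {a, rot v a, rot v (rot v a)}"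
proof -
  have ra: "rot v a \<in> nbrs E v" using rot_in[OF v a] .
  have rra: "rot v (rot v a) \<in> nbrs E v" using rot_in[OF v ra] .
  have d1: "rot v a \<noteq> a" using rot_nofix[OF v a] .
  have d2: "rot v (rot v a) \<noteq> a" using rot_no2[OF v a] .
  have d3: "rot v (rot v a) \<noteq> rot v a" using rot_nofix[OF v ra] .
  have "card {a, rot v a, rot v (rot v a)} = 3" using d1 d2 d3 by auto
  moreover have "finite (nbrs E v)" using c3[OF v] card.infinite by fastforce
  ultimately show ?thesis using a ra rra c3[OF v] by (metis card_subset_eq empty_subsetI insert_subset)
qed

lemma rot3:
  assumes v: "v \<in> V" and a: "a \<in> nbrs E v" shows "rot v (rot v (rot v a)) = a"
proof -
  have ra: "rot v a \<in> nbrs E v" using rot_in[OF v a] .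
  have rra: "rot v (rot v a) \<in> nbrs E v" using rot_in[OF v ra] .
  have "rot v (rot v (rot v a)) \<in> nbrs E v" using rot_in[OF v rra] .
  then have "rot v (rot v (rot v a)) \<in> {a, rot v a, rot v (rot v a)}" using rot_nbrs[OF v a] by simp
  moreover have "rot v (rot v (rot v a)) \<noteq> rot v a"
    using rot_inj[OF v rra a] rot_no2[OF v a] by auto
  moreover have "rot v (rot v (rot v a)) \<noteq> rot v (rot v a)"
    using rot_nofix[OF v rra] by auto
  ultimately show ?thesis by auto
qed

lemma phi_E: "d \<in> E \<Longrightarrow> phi rot d \<in> E"
proof -
  assume d: "d \<in> E"
  obtain u v where uv: "d = (u,v)" by (cases d)
  have v: "v \<in> V" using EV d uv by auto
  have "u \<in> nbrs E v" using Esym d uv nbrs_iff by auto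
  then have "rot v u \<in> nbrs E v" using rot_in[OF v] by auto
  then show ?thesis unfolding phi_def uv nbrs_iff by simp
qed

lemma phi_inj: "inj_on (phi rot) E"
proof (rule inj_onI)
  fix d e assume d: "d \<in> E" and e: "e \<in> E" and eq: "phi rot d = phi rot e"
  obtain u v where uv: "d = (u,v)" by (cases d)
  obtain u' v' where uv': "e = (u',v')" by (cases e)
  have vv: "v = v'" using eq uv uv' unfolding phi_def by simp
  have v: "v \<in> V" using EV d uv by auto
  have "u \<in> nbrs E v" "u' \<in> nbrs E v" using Esym d e uv uv' vv nbrs_iff by auto
  moreover have "rot v u = rot v u'" using eq uv uv' vv unfolding phi_def by simp
  ultimately show "d = e" using rot_inj[OF v] uv uv' vv by auto
qed

abbreviation fp :: "nat \<Rightarrow> 'a \<times> 'a \<Rightarrow> 'a \<times> 'a" where "fp k d \<equiv> (phi rot ^^ k) d"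

lemma fp_E: "d \<in> E \<Longrightarrow> fp k d \<in> E"
  by (induction k) (auto simp: phi_E)

lemma fp_add: "fp (i + j) d = fp i (fp j d)" by (simp add: funpow_add)

lemma fp_cancel:
  assumes d: "d \<in> E" and eq: "fp i d = fp (i + k) d" shows "fp k d = d"
  using eq
proof (induction i)
  case 0 then show ?case by simp
next
  case (Suc i)
  have "phi rot (fp i d) = phi rot (fp (i+k) d)" using Suc.prems by simp
  then have "fp i d = fp (i+k) d" using phi_inj fp_E[OF d] by (meson inj_onD)
  then show ?case using Suc.IH by simp
qed

lemma face_sub: assumes d: "d \<in> E" shows "face_of rot d \<subseteq> E"
proof
  fix e assume "e \<in> face_of rot d"
  then obtain k where "e = fp k d" unfolding face_of_def by auto
  then show "e \<in> E" using fp_E[OF d] by simp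
qed

lemma face_fin: "d \<in> E \<Longrightarrow> finite (face_of rot d)"
  by (rule finite_subset[OF face_sub finE])

lemma period_ex: assumes d: "d \<in> E" shows "\<exists>p>0. fp p d = d"
proof -
  let ?F = "face_of rot d"
  let ?g = "\<lambda>k. fp k d"
  have sub: "?g ` {..card ?F} \<subseteq> ?F"
  proof
    fix x assume "x \<in> ?g ` {..card ?F}"
    then obtain k where "x = fp k d" by blast
    then show "x \<in> ?F" unfolding face_of_def by blast
  qed
  have nle: "\<not> card {..card ?F} \<le> card ?F" by simp
  have "\<not> inj_on ?g {..card ?F}"
  proof
    assume "inj_on ?g {..card ?F}"
    from card_inj_on_le[OF this sub face_fin[OF d]] nle show False by simp
  qed
  then obtain i j where ij: "i \<noteq> j" "fp i d = fp j d" unfolding inj_on_def by blast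
  show ?thesis
  proof (cases "i < j")
    case True
    then have "fp i d = fp (i + (j - i)) d" using ij by simp
    then have "fp (j - i) d = d" by (rule fp_cancel[OF d])
    moreover have "j - i > 0" using True by simp
    ultimately show ?thesis by blast
  next
    case False
    then have "fp j d = fp (j + (i - j)) d" using ij by simp
    then have "fp (i - j) d = d" by (rule fp_cancel[OF d])
    moreover have "i - j > 0" using False ij(1) by simp
    ultimately show ?thesis by blast
  qed
qed

definition per :: "'a \<times> 'a \<Rightarrow> nat" where "per d = (LEAST p. p > 0 \<and> fp p d = d)"

lemma per: assumes d: "d \<in> E" shows "per d > 0" "fp (per d) d = d"
  using LeastI_ex[OF period_ex[OF d]] unfolding per_def by auto

lemma per_min: "d \<in> E \<Longrightarrow> 0 < k \<Longrightarrow> k < per d \<Longrightarrow> fp k d \<noteq> d"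
  unfolding per_def using not_less_Least by blast

lemma fp_mod: assumes d: "d \<in> E" shows "fp k d = fp (k mod per d) d"
proof -
  have "fp (m * per d) d = d" for m
    by (induction m) (auto simp: fp_add per(2)[OF d])
  moreover have "k = k mod per d + (k div per d) * per d" using div_mult_mod_eq[of k "per d"] by linarith
  ultimately show ?thesis by (metis fp_add)
qed

lemma fp_inj: assumes d: "d \<in> E" and i: "i < per d" and j: "j < per d" and eq: "fp i d = fp j d"
  shows "i = j"
proof (rule ccontr)
  assume "i \<noteq> j"
  then consider "i < j" | "j < i" by arith
  then show False
  proof cases
    case 1
    then have "fp i d = fp (i + (j-i)) d" using eq by simp
    then have "fp (j-i) d = d" by (rule fp_cancel[OF d])
    then show False using per_min[OF d, of "j-i"] 1 j by auto
  next
    case 2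
    then have "fp j d = fp (j + (i-j)) d" using eq by simp
    then have "fp (i-j) d = d" by (rule fp_cancel[OF d])
    then show False using per_min[OF d, of "i-j"] 2 i by auto
  qed
qed

lemma face_eq: assumes d: "d \<in> E" shows "face_of rot d = (\<lambda>k. fp k d) ` {..<per d}"
proof -
  have "fp k d \<in> (\<lambda>k. fp k d) ` {..<per d}" for k
    using fp_mod[OF d, of k] per(1)[OF d] by auto
  then show ?thesis unfolding face_of_def by auto
qed

lemma card_face: assumes d: "d \<in> E" shows "card (face_of rot d) = per d"
proof -
  have "inj_on (\<lambda>k. fp k d) {..<per d}" using fp_inj[OF d] by (auto intro: inj_onI)
  then show ?thesis unfolding face_eq[OF d] by (simp add: card_image)
qed

lemma fp_card: "d \<in> E \<Longrightarrow> fp (card (face_of rot d)) d = d"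
  using card_face per by simp

lemma self_in_face: "d \<in> face_of rot d"
proof -
  have "d = fp 0 d" by simp
  then show ?thesis unfolding face_of_def by blast
qed

lemma face_trans: "e = fp k d \<Longrightarrow> face_of rot e \<subseteq> face_of rot d"
proof
  fix x assume e: "e = fp k d" and "x \<in> face_of rot e"
  then obtain j where "x = fp j e" unfolding face_of_def by auto
  then have "x = fp (j + k) d" using e by (simp add: fp_add)
  then show "x \<in> face_of rot d" unfolding face_of_def by blast
qed

lemma face_of_mem: assumes d: "d \<in> E" and e: "e \<in> face_of rot d" shows "face_of rot e = face_of rot d"
proof -
  obtain k where k: "e = fp k d" using e unfolding face_of_def by auto
  have eE: "e \<in> E" using k fp_E[OF d] by simp
  have s1: "face_of rot e \<subseteq> face_of rot d" using face_trans[OF k] .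
  have le: "k \<le> per d * Suc k" using per(1)[OF d] by (cases "per d") auto
  have "fp (per d * (Suc k) - k) e = fp (per d * Suc k - k + k) d"
    unfolding k fp_add[symmetric] by simp
  also have "per d * Suc k - k + k = per d * Suc k" using le by simp
  finally have "fp (per d * (Suc k) - k) e = fp (per d * Suc k) d" .
  also have "\<dots> = d" using fp_mod[OF d, of "per d * Suc k"] by simp
  finally have "d = fp (per d * Suc k - k) e" by simp
  then have "face_of rot d \<subseteq> face_of rot e" by (rule face_trans)
  then show ?thesis using s1 by auto
qed

end


context
  fixes V E rot assumes gc: "GC V E rot"
begin

abbreviation fp' :: "nat \<Rightarrow> 'a \<times> 'a \<Rightarrow> 'a \<times> 'a" where "fp' k d \<equiv> (phi rot ^^ k) d"

definition wk :: "'a \<times> 'a \<Rightarrow> nat \<Rightarrow> 'a" where "wk d k = fst (fp' k d)"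

lemma W1: "fp' k d = (wk d k, wk d (Suc k))"
  unfolding wk_def by (simp add: phi_def)

lemma W2: "wk d (Suc (Suc k)) = rot (wk d (Suc k)) (wk d k)"
  using W1[of "Suc k" d] W1[of k d] by (simp add: phi_def)

lemma W3: "d \<in> E \<Longrightarrow> (wk d k, wk d (Suc k)) \<in> E"
  using W1[of k d] fp_E[OF gc] by metis

lemma W4: "d \<in> E \<Longrightarrow> wk d (k + per rot d) = wk d k"
  unfolding wk_def using fp_mod[OF gc, of d "k + per rot d"] fp_mod[OF gc, of d k] by simp

lemma WA: "d \<in> E \<Longrightarrow> wk d k \<noteq> wk d (Suc k)"
  using W3[of d k] noloop[OF gc] by metis

lemma WB: assumes d: "d \<in> E" shows "wk d k \<noteq> wk d (Suc (Suc k))"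
proof -
  have e: "(wk d k, wk d (Suc k)) \<in> E" using W3[OF d] .
  have v: "wk d (Suc k) \<in> V" using EV[OF gc e] by simp
  have "wk d k \<in> nbrs E (wk d (Suc k))" using Esym[OF gc e] nbrs_iff[OF gc] by metis
  then show ?thesis unfolding W2 using rot_nofix[OF gc v] by metis
qed

lemma WC: assumes d: "d \<in> E" and p6: "per rot d = 6" shows "wk d k \<noteq> wk d (k+3)"
proof
  assume eq: "wk d k = wk d (k+3)"
  let ?w = "wk d"
  define a where "a = ?w k"
  define b1 where "b1 = ?w (k+1)"
  define b2 where "b2 = ?w (k+2)"
  define c1 where "c1 = ?w (k+4)"
  define c5 where "c5 = ?w (k+5)"
  have w6: "?w (k+6) = a" using W4[OF d, of k] p6 a_def by simp
  have w7: "?w (k+7) = b1" using W4[OF d, of "k+1"] p6 b1_def by (simp add: add.commute)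
  have av: "a \<in> V" using EV[OF gc W3[OF d, of k]] a_def by simp
  have r1: "rot a c5 = b1"
    using W2[of d "k+5"] w6 w7 c5_def by (simp add: numeral_eq_Suc)
  have r2: "rot a b2 = c1"
    using W2[of d "k+2"] eq a_def b2_def c1_def by (simp add: numeral_eq_Suc)
  have n1: "b1 \<in> nbrs E a" using W3[OF d, of k] a_def b1_def nbrs_iff[OF gc] by (simp add: numeral_eq_Suc)
  have n2: "c5 \<in> nbrs E a" using Esym[OF gc W3[OF d, of "k+5"]] w6 c5_def nbrs_iff[OF gc] by (simp add: numeral_eq_Suc)
  have n3: "b2 \<in> nbrs E a" using Esym[OF gc W3[OF d, of "k+2"]] eq a_def b2_def nbrs_iff[OF gc] by (simp add: numeral_eq_Suc)
  have n4: "c1 \<in> nbrs E a" using W3[OF d, of "k+3"] eq a_def c1_def nbrs_iff[OF gc] by (simp add: numeral_eq_Suc)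
  have d1: "b1 \<noteq> b2" using WA[OF d, of "k+1"] b1_def b2_def by (simp add: numeral_eq_Suc)
  have d2: "c1 \<noteq> c5" using WA[OF d, of "k+4"] c1_def c5_def by (simp add: numeral_eq_Suc)
  have d3: "c5 \<noteq> b1" using WB[OF d, of "k+5"] c5_def w7 by (simp add: numeral_eq_Suc)
  have d4: "b2 \<noteq> c1" using WB[OF d, of "k+2"] b2_def c1_def by (simp add: numeral_eq_Suc)
  have "b1 = c1 \<or> b2 = c5"
  proof (rule ccontr)
    assume "\<not> (b1 = c1 \<or> b2 = c5)"
    then have "card {b1, b2, c1, c5} = 4" using d1 d2 d3 d4 by auto
    moreover have "{b1, b2, c1, c5} \<subseteq> nbrs E a" using n1 n2 n3 n4 by auto
    moreover have "finite (nbrs E a)" using c3[OF gc av] card.infinite by fastforce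
    ultimately have "4 \<le> card (nbrs E a)" by (metis card_mono)
    then show False using c3[OF gc av] by simp
  qed
  then have "b1 = c1"
  proof
    assume "b2 = c5" then show "b1 = c1" using r1 r2 by simp
  qed
  then have "fp' k d = fp' (k+3) d"
    using W1[of k d] W1[of "k+3" d] eq a_def b1_def c1_def by (simp add: numeral_eq_Suc)
  then have "fp' (k mod 6) d = fp' ((k+3) mod 6) d"
    using fp_mod[OF gc d, of k] fp_mod[OF gc d, of "k+3"] p6 by simp
  then have "k mod 6 = (k+3) mod 6" using fp_inj[OF gc d] p6 by simp
  then show False by presburger
qed

lemma walk_distinct:
  assumes d: "d \<in> E" and p: "per rot d = 5 \<or> per rot d = 6"
    and i: "i < per rot d" and j: "j < per rot d" and ij: "i < j"
  shows "wk d i \<noteq> wk d j"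
proof -
  let ?p = "per rot d"
  have per: "\<And>k. wk d (k + ?p) = wk d k" using W4[OF d] .
  consider "j = i + 1" | "j = i + 2" | "j = i + 3" | "j = i + 4" | "j = i + 5"
    using i j ij p by linarith
  then show ?thesis
  proof cases
    case 1 then show ?thesis using WA[OF d, of i] by simp
  next
    case 2 then show ?thesis using WB[OF d, of i] by (simp add: numeral_eq_Suc)
  next
    case 3 show ?thesis
    proof (cases "?p = 6")
      case True then show ?thesis using WC[OF d True, of i] 3 by simp
    next
      case False then have "?p = 5" using p by simp
      then have "wk d (j + 2) = wk d i" using per[of i] 3 by (simp add: add.commute)
      then show ?thesis using WB[OF d, of j] by (simp add: numeral_eq_Suc)
    qed
  next
    case 4 show ?thesis
    proof (cases "?p = 6")
      case True
      then have "wk d (j + 2) = wk d i" using per[of i] 4 by (simp add: add.commute)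
      then show ?thesis using WB[OF d, of j] by (simp add: numeral_eq_Suc)
    next
      case False then have "?p = 5" using p by simp
      then have "wk d (j + 1) = wk d i" using per[of i] 4 by (simp add: add.commute)
      then show ?thesis using WA[OF d, of j] by simp
    qed
  next
    case 5
    then have "?p = 6" using j p by simp
    then have "wk d (j + 1) = wk d i" using per[of i] 5 by (simp add: add.commute)
    then show ?thesis using WA[OF d, of j] by simp
  qed
qed

end


context
  fixes V :: "'a set" and E :: "('a \<times> 'a) set" and rot :: "'a \<Rightarrow> 'a \<Rightarrow> 'a"
    and cs :: "'a list" and f :: "('a \<times> 'a) set" and vs :: "'a list"
    and a0 a1 a2 a3 a4 a5 :: 'a
  assumes full: "fullerene V E rot"
    and lc: "longest_cycle V E cs"
    and fF: "f \<in> faces E rot"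
    and wf: "white_face cs f"
    and cf: "card f = 6"
    and lv: "length vs = 6"
    and fdef: "f = face_of rot (vs ! 0, vs ! 1)"
    and H8: "\<forall>i<6. phi rot (vs ! i, vs ! ((i + 1) mod 6)) = (vs ! ((i + 1) mod 6), vs ! ((i + 2) mod 6))"
    and C34: "in_C cs (vs ! 3, vs ! 4)"
    and C45: "in_C cs (vs ! 4, vs ! 5)"
    and C50: "in_C cs (vs ! 5, vs ! 0)"
    and vsd: "vs = [a0,a1,a2,a3,a4,a5]"
begin

lemma gc: "GC V E rot" using fullerene_GC[OF full] .
lemma sE': "sym E" using sE[OF gc] .
lemma cyc: "is_cycle V E cs" using lc unfolding longest_cycle_def by auto

lemma Es: "(a,b) \<in> E \<Longrightarrow> (b,a) \<in> E" using Esym[OF gc] .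
lemma EV1: "(a,b) \<in> E \<Longrightarrow> a \<in> V" using EV[OF gc] by blast
lemma nb: "b \<in> nbrs E a \<longleftrightarrow> (a,b) \<in> E" unfolding nbrs_def by simp

definition d0 where "d0 = (vs!0, vs!1)"

lemma d0E: "d0 \<in> E"
proof -
  obtain e where e: "e \<in> E" "f = face_of rot e" using fF unfolding faces_def by auto
  have "d0 \<in> f" unfolding fdef d0_def by (rule self_in_face[OF gc])
  then show ?thesis using face_sub[OF gc e(1)] e(2) by auto
qed

lemma fp_d0: "(phi rot ^^ k) d0 = (vs!(k mod 6), vs!((k+1) mod 6))"
proof (induction k)
  case 0 then show ?case unfolding d0_def by simp
next
  case (Suc k)
  have "(phi rot ^^ Suc k) d0 = phi rot (vs!(k mod 6), vs!((k+1) mod 6))" using Suc by simp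
  also have "(k+1) mod 6 = (k mod 6 + 1) mod 6" by (simp add: mod_Suc_eq)
  also have "phi rot (vs!(k mod 6), vs!((k mod 6 + 1) mod 6)) = (vs!((k mod 6 + 1) mod 6), vs!((k mod 6 + 2) mod 6))"
    using H8 by simp
  also have "(k mod 6 + 1) mod 6 = (Suc k) mod 6" by (simp add: mod_Suc_eq)
  also have "(k mod 6 + 2) mod 6 = (Suc k + 1) mod 6" by (metis add_2_eq_Suc' mod_Suc_eq Suc_eq_plus1)
  finally show ?case by simp
qed

lemma per_d0: "per rot d0 = 6"
  using card_face[OF gc d0E] cf fdef d0_def by simp

lemma wk_d0: "wk rot d0 k = vs ! (k mod 6)"
  unfolding wk_def[OF gc] using fp_d0[of k] by simp

lemma vs_dist: "i < 6 \<Longrightarrow> j < 6 \<Longrightarrow> i \<noteq> j \<Longrightarrow> vs!i \<noteq> vs!j"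
proof -
  assume i: "i < 6" and j: "j < 6" and ij: "i \<noteq> j"
  show ?thesis
  proof (cases "i < j")
    case True
    then have "wk rot d0 i \<noteq> wk rot d0 j" using walk_distinct[OF gc d0E] per_d0 i j by simp
    then show ?thesis using i j wk_d0 by simp
  next
    case False
    then have "j < i" using ij by simp
    then have "wk rot d0 j \<noteq> wk rot d0 i" using walk_distinct[OF gc d0E] per_d0 i j by simp
    then show ?thesis using i j wk_d0 by simp
  qed
qed

lemma vsl: "vs = [vs!0, vs!1, vs!2, vs!3, vs!4, vs!5]"
  by (rule nth_equalityI) (use lv in \<open>auto simp: less_Suc_eq numeral_eq_Suc\<close>)

lemma dvs: "distinct [vs!0, vs!1, vs!2, vs!3, vs!4, vs!5]"
  using vs_dist by (simp add: numeral_eq_Suc) 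

lemma fpE6: "((vs!(k mod 6), vs!((k+1) mod 6))) \<in> E"
  using fp_E[OF gc d0E, of k] fp_d0[of k] by simp

lemma fE: "(a0,a1) \<in> E" "(a1,a2) \<in> E" "(a2,a3) \<in> E" "(a3,a4) \<in> E" "(a4,a5) \<in> E" "(a5,a0) \<in> E"
  using fpE6[of 0] fpE6[of 1] fpE6[of 2] fpE6[of 3] fpE6[of 4] fpE6[of 5] by (simp_all add: vsd)

lemma uV: "a0 \<in> V" "a1 \<in> V" "a2 \<in> V" "a3 \<in> V" "a4 \<in> V" "a5 \<in> V"
  using fE EV1 by blast+

lemma rotf: "rot a1 a0 = a2" "rot a2 a1 = a3" "rot a3 a2 = a4" "rot a4 a3 = a5" "rot a5 a4 = a0" "rot a0 a5 = a1"
  using H8[rule_format, of 0] H8[rule_format, of 1] H8[rule_format, of 2] H8[rule_format, of 3]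
    H8[rule_format, of 4] H8[rule_format, of 5] by (simp_all add: phi_def vsd)

lemma f_eq: "f = (\<lambda>k. (vs!k, vs!((k+1) mod 6))) ` {..<6}"
proof -
  have "f = (\<lambda>k. (phi rot ^^ k) d0) ` {..<6}" using face_eq[OF gc d0E] per_d0 fdef d0_def by simp
  also have "\<dots> = (\<lambda>k. (vs!k, vs!((k+1) mod 6))) ` {..<6}" by (rule image_cong) (auto simp: fp_d0)
  finally show ?thesis .
qed

lemma f_set: "f = {(a0,a1),(a1,a2),(a2,a3),(a3,a4),(a4,a5),(a5,a0)}"
proof -
  have "{..<6::nat} = {0,1,2,3,4,5}" by auto
  then show ?thesis unfolding f_eq by (simp add: vsd)
qed

lemma fv: "face_vertices f = {a0,a1,a2,a3,a4,a5}"
  unfolding face_vertices_def f_set by auto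

lemma dist: "distinct [a0,a1,a2,a3,a4,a5]" using dvs vsd by simp

lemma neq: "a0 \<noteq> a1" "a0 \<noteq> a2" "a0 \<noteq> a3" "a0 \<noteq> a4" "a0 \<noteq> a5" "a1 \<noteq> a0" "a1 \<noteq> a2" "a1 \<noteq> a3" "a1 \<noteq> a4" "a1 \<noteq> a5" "a2 \<noteq> a0" "a2 \<noteq> a1" "a2 \<noteq> a3" "a2 \<noteq> a4" "a2 \<noteq> a5" "a3 \<noteq> a0" "a3 \<noteq> a1" "a3 \<noteq> a2" "a3 \<noteq> a4" "a3 \<noteq> a5" "a4 \<noteq> a0" "a4 \<noteq> a1" "a4 \<noteq> a2" "a4 \<noteq> a3" "a4 \<noteq> a5" "a5 \<noteq> a0" "a5 \<noteq> a1" "a5 \<noteq> a2" "a5 \<noteq> a3" "a5 \<noteq> a4"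
  using dist by auto

lemma inC: "a0 \<in> set cs" "a3 \<in> set cs" "a4 \<in> set cs" "a5 \<in> set cs"
  using in_C_set[OF C34] in_C_set[OF C45] in_C_set[OF C50] vsd by auto

lemma white12: "a1 \<notin> set cs" "a2 \<notin> set cs"
proof -
  have "{v \<in> face_vertices f. v \<notin> set cs} \<subseteq> {a1,a2}" using fv inC by auto
  moreover have "card {v \<in> face_vertices f. v \<notin> set cs} = 2" using wf unfolding white_face_def white_count_def .
  moreover have "card {a1,a2} = 2" using dist by simp
  ultimately have eq: "{v \<in> face_vertices f. v \<notin> set cs} = {a1,a2}"
    using card_subset_eq[of "{a1,a2}"] by simp
  have "a1 \<in> {v \<in> face_vertices f. v \<notin> set cs}" "a2 \<in> {v \<in> face_vertices f. v \<notin> set cs}"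
    by (subst eq, simp)+
  then show "a1 \<notin> set cs" "a2 \<notin> set cs" by auto
qed

lemma cyc_len: "3 \<le> length cs" using cyc unfolding is_cycle_def by auto

lemma D_ex: "\<exists>D. longest_cycle V E D \<and> set D = (set cs - {a4,a5}) \<union> {a1,a2}"
proof -
  have e34: "in_C cs (a3,a4)" using C34 vsd by simp
  have e45: "in_C cs (a4,a5)" using C45 vsd by simp
  have e50: "in_C cs (a5,a0)" using C50 vsd by simp
  obtain cs' r where s: "same_cyc V E cs cs'" and cs': "cs' = a3 # a4 # r"
    using norm[OF cyc sE' e34] by blast
  have cyc': "is_cycle V E cs'" and len': "length cs' = length cs" and set': "set cs' = set cs"
    and inC': "\<And>x y. in_C cs' (x,y) = in_C cs (x,y)" using s unfolding same_cyc_def by auto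
  have n3: "3 \<le> length cs'" using cyc' unfolding is_cycle_def by auto
  have dcs': "distinct cs'" using cyc' unfolding is_cycle_def by auto
  have "in_C cs' (cs'!1, a5)" using inC' e45 cs' by simp
  then have "a5 = cs'!((1+1) mod length cs') \<or> a5 = cs'!((1+length cs'-1) mod length cs')"
    using in_C_nth[OF cyc', of 1 a5] n3 by simp
  moreover have "(1+length cs'-1) mod length cs' = 0" by simp
  moreover have "(1+1) mod length cs' = 2" using n3 by simp
  ultimately have "a5 = cs'!2" using dist cs' by auto
  then obtain r1 where r: "r = a5 # r1" using n3 cs' by (cases r) auto
  have "in_C cs' (cs'!2, a0)" using inC' e50 cs' r by simp
  then have "a0 = cs'!((2+1) mod length cs') \<or> a0 = cs'!((2+length cs'-1) mod length cs')"
    using in_C_nth[OF cyc', of 2 a0] n3 by simp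
  moreover have "(2+length cs'-1) mod length cs' = 1"
  proof -
    have "2+length cs'-1 = 1 + length cs'" by simp
    then have "(2+length cs'-1) mod length cs' = 1 mod length cs'" by (simp only: mod_add_self2)
    then show ?thesis using n3 by simp
  qed
  ultimately have a0: "a0 = cs'!((2+1) mod length cs')" using dist cs' r by auto
  have "length cs' \<noteq> 3"
  proof
    assume "length cs' = 3" then have "a0 = cs'!0" using a0 by simp
    then show False using dist cs' by simp
  qed
  then have "(2+1) mod length cs' = 3" using n3 by simp
  then have "a0 = cs'!3" using a0 by simp
  then obtain rest where r1: "r1 = a0 # rest" using \<open>length cs' \<noteq> 3\<close> n3 cs' r by (cases r1) auto
  have cs'f: "cs' = a3 # [a4,a5] @ a0 # rest" using cs' r r1 by simp
  have lc': "longest_cycle V E cs'" using longest_same[OF lc s] .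
  define D where "D = a3 # [a2,a1] @ a0 # rest"
  have cycD: "is_cycle V E D" unfolding D_def
  proof (rule replace_cycle[OF cyc'[unfolded cs'f]])
    show "distinct [a2,a1]" using neq by simp
    show "set [a2,a1] \<subseteq> V" using uV by simp
    show "set [a2,a1] \<inter> set (a3 # a0 # rest) = {}" using white12 set' cs'f by auto
    show "pe (a3 # [a2,a1] @ [a0]) \<subseteq> E" using fE Es unfolding pe_def by auto
    show "length [a4,a5] \<le> length [a2,a1]" by simp
  qed
  have "length D = length cs" using len' cs'f D_def by simp
  then have "longest_cycle V E D" using cycD lc unfolding longest_cycle_def by simp
  moreover have "set D = (set cs - {a4,a5}) \<union> {a1,a2}"
  proof -
    have "a4 \<notin> set rest" "a5 \<notin> set rest" using dcs' cs'f by auto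
    then show ?thesis unfolding D_def using set' cs'f dist by auto
  qed
  ultimately show ?thesis by blast
qed

definition "dh = (a5,a4)"
definition "hw k = wk rot dh k"
definition "pp = per rot dh"

lemma dhE: "dh \<in> E" unfolding dh_def using fE Es by blast

lemma hF: "face_of rot dh \<in> faces E rot" unfolding faces_def using dhE by blast

lemma pp56: "pp = 5 \<or> pp = 6"
proof -
  have "card (face_of rot dh) = 5 \<or> card (face_of rot dh) = 6"
    using full hF unfolding fullerene_def by blast
  then show ?thesis using card_face[OF gc dhE] unfolding pp_def by simp
qed

lemma hw01: "hw 0 = a5" "hw 1 = a4"
  using W1[OF gc, of 0 dh] unfolding hw_def dh_def by simp_all

lemma hw2: "hw 2 = rot a4 a5"
  using W2[OF gc, of dh 0] hw01 unfolding hw_def by (simp add: numeral_2_eq_2)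

lemma hwE: "(hw k, hw (Suc k)) \<in> E" unfolding hw_def using W3[OF gc dhE] .

lemma hwper: "hw (k + pp) = hw k" unfolding hw_def pp_def using W4[OF gc dhE] .

lemma hwd: "i < pp \<Longrightarrow> j < pp \<Longrightarrow> i \<noteq> j \<Longrightarrow> hw i \<noteq> hw j"
proof -
  assume i: "i < pp" and j: "j < pp" and ij: "i \<noteq> j"
  show ?thesis
  proof (cases "i < j")
    case True then show ?thesis using walk_distinct[OF gc dhE, of i j] pp56 i j unfolding hw_def pp_def by simp
  next
    case False then have "j < i" using ij by simp
    then show ?thesis using walk_distinct[OF gc dhE, of j i] pp56 i j unfolding hw_def pp_def by metis
  qed
qed

lemma hwx: "rot a5 (hw (pp - 1)) = a4"
proof -
  have pp0: "pp - 1 + 1 = pp" using pp56 by auto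
  have "hw (Suc (Suc (pp - 1))) = rot (hw (Suc (pp - 1))) (hw (pp - 1))"
    unfolding hw_def by (rule W2[OF gc])
  moreover have "hw (Suc (pp - 1)) = a5" using hwper[of 0] hw01 pp0 by simp
  moreover have "hw (Suc (Suc (pp - 1))) = a4" using hwper[of 1] hw01 pp0 by (simp add: add.commute)
  ultimately show ?thesis by simp
qed

lemma nbE: "b \<in> nbrs E a \<longleftrightarrow> (a,b) \<in> E" unfolding nbrs_def by simp

lemma a5a4: "a5 \<in> nbrs E a4" "a3 \<in> nbrs E a4" "a4 \<in> nbrs E a5" "a0 \<in> nbrs E a5"
  "a1 \<in> nbrs E a0" "a5 \<in> nbrs E a0" "a2 \<in> nbrs E a3" "a4 \<in> nbrs E a3"
  using fE Es unfolding nbE by blast+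

lemma yfacts: "hw 2 \<in> nbrs E a4" "hw 2 \<noteq> a5" "hw 2 \<noteq> a3" "hw 2 \<noteq> a4"
proof -
  show "hw 2 \<in> nbrs E a4" unfolding hw2 by (rule rot_in[OF gc uV(5) a5a4(1)])
  show "hw 2 \<noteq> a5" unfolding hw2 by (rule rot_nofix[OF gc uV(5) a5a4(1)])
  show "hw 2 \<noteq> a3" unfolding hw2 using rot_no2[OF gc uV(5) a5a4(2)] rotf by auto
  show "hw 2 \<noteq> a4" using hwd[of 1 2] hw01 pp56 by auto
qed

lemma xfacts: "hw (pp-1) \<in> nbrs E a5" "hw (pp-1) \<noteq> a4" "hw (pp-1) \<noteq> a0" "hw (pp-1) \<noteq> a5"
proof -
  have pp0: "pp - 1 + 1 = pp" using pp56 by auto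
  have "(hw (pp-1), hw (Suc (pp-1))) \<in> E" by (rule hwE)
  moreover have "hw (Suc (pp - 1)) = a5" using hwper[of 0] hw01 pp0 by simp
  ultimately show "hw (pp-1) \<in> nbrs E a5" using Es unfolding nbE by auto
  show "hw (pp-1) \<noteq> a4" using hwd[of 1 "pp-1"] hw01 pp56 by auto
  show "hw (pp-1) \<noteq> a5" using hwd[of 0 "pp-1"] hw01 pp56 by auto
  show "hw (pp-1) \<noteq> a0"
  proof
    assume "hw (pp-1) = a0"
    then have "rot a5 (rot a5 a4) = a4" using hwx rotf by simp
    then show False using rot_no2[OF gc uV(6) a5a4(3)] by simp
  qed
qed

lemma eC: "in_C cs (a3,a4)" "in_C cs (a4,a5)" "in_C cs (a5,a0)"
  "in_C cs (a4,a3)" "in_C cs (a5,a4)" "in_C cs (a0,a5)"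
proof -
  show 1: "in_C cs (a3,a4)" using C34 vsd by simp
  show 2: "in_C cs (a4,a5)" using C45 vsd by simp
  show 3: "in_C cs (a5,a0)" using C50 vsd by simp
  show "in_C cs (a4,a3)" using 1 in_C_sym[of cs a3 a4] by simp
  show "in_C cs (a5,a4)" using 2 in_C_sym[of cs a4 a5] by simp
  show "in_C cs (a0,a5)" using 3 in_C_sym[of cs a5 a0] by simp
qed

lemma c3': "v \<in> V \<Longrightarrow> card (nbrs E v) = 3" using c3[OF gc] .

lemma nbV: "b \<in> nbrs E a \<Longrightarrow> b \<in> V \<and> a \<in> V" unfolding nbE using EV[OF gc] by blast

lemma nbsym: "b \<in> nbrs E a \<Longrightarrow> a \<in> nbrs E b" unfolding nbE using Es by blast

lemma not_y0: "hw 2 \<noteq> a0"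
proof
  assume y: "hw 2 = a0"
  have "a4 \<in> nbrs E a0" using yfacts(1) y nbsym by simp
  then have "in_C cs (a0,a4)"
    using deg2[OF cyc sE' inC(1) c3'[OF uV(1)] a5a4(5) white12(1)] neq by simp
  then have "in_C cs (a4,a0)" using in_C_sym[of cs a0 a4] by simp
  show False by (rule in_C_three[OF cyc eC(4) eC(2) \<open>in_C cs (a4,a0)\<close>]) (use neq in simp)+
qed

lemma not_y1: "hw 2 \<noteq> a1"
proof
  assume y: "hw 2 = a1"
  have "(a4,a1) \<in> E" using yfacts(1) y unfolding nbE by simp
  show False
    by (rule R1[OF lc sE' eC(1), of "[a2,a1]"]) (use white12 neq uV fE Es \<open>(a4,a1) \<in> E\<close> in \<open>auto simp: pe_def\<close>)
qed

lemma not_y2: "hw 2 \<noteq> a2"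
proof
  assume y: "hw 2 = a2"
  have "(a4,a2) \<in> E" using yfacts(1) y unfolding nbE by simp
  show False
    by (rule R1[OF lc sE' eC(1), of "[a2]"]) (use white12 neq uV fE Es \<open>(a4,a2) \<in> E\<close> in \<open>auto simp: pe_def\<close>)
qed

lemma not_x3: "hw (pp-1) \<noteq> a3"
proof
  assume x: "hw (pp-1) = a3"
  have "a5 \<in> nbrs E a3" using xfacts(1) x nbsym by simp
  then have "in_C cs (a3,a5)"
    using deg2[OF cyc sE' inC(2) c3'[OF uV(4)] a5a4(7) white12(2)] neq by simp
  then have "in_C cs (a5,a3)" using in_C_sym[of cs a3 a5] by simp
  show False by (rule in_C_three[OF cyc eC(5) eC(3) \<open>in_C cs (a5,a3)\<close>]) (use neq in simp)+
qed

lemma not_x1: "hw (pp-1) \<noteq> a1"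
proof
  assume x: "hw (pp-1) = a1"
  have "(a5,a1) \<in> E" using xfacts(1) x unfolding nbE by simp
  show False
    by (rule R1[OF lc sE' eC(3), of "[a1]"]) (use white12 neq uV fE Es \<open>(a5,a1) \<in> E\<close> in \<open>auto simp: pe_def\<close>)
qed

lemma not_x2: "hw (pp-1) \<noteq> a2"
proof
  assume x: "hw (pp-1) = a2"
  have "(a5,a2) \<in> E" using xfacts(1) x unfolding nbE by simp
  show False
    by (rule R1[OF lc sE' eC(3), of "[a2,a1]"]) (use white12 neq uV fE Es \<open>(a5,a2) \<in> E\<close> in \<open>auto simp: pe_def\<close>)
qed

lemma dg: "is_cycle V E Z \<Longrightarrow> u \<in> set Z \<Longrightarrow> (u,a) \<in> E \<Longrightarrow> a \<notin> set Z \<Longrightarrow> (u,b) \<in> E \<Longrightarrow> b \<noteq> a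
   \<Longrightarrow> in_C Z (u,b)"
proof -
  assume z: "is_cycle V E Z" and u: "u \<in> set Z" and a: "(u,a) \<in> E" "a \<notin> set Z"
    and b: "(u,b) \<in> E" "b \<noteq> a"
  have uV: "u \<in> V" using EV[OF gc a(1)] by simp
  show ?thesis
    by (rule deg2[OF z sE' u c3'[OF uV] _ a(2) _ b(2)]) (use a b in \<open>simp_all add: nbE\<close>)
qed

lemma inCs: "in_C Z (a,b) \<Longrightarrow> in_C Z (b,a)" using in_C_sym by metis

lemma inCset: "in_C Z (a,b) \<Longrightarrow> b \<in> set Z" using in_C_set by fast

lemma three_a4: "in_C cs (a4, v) \<Longrightarrow> v \<noteq> a3 \<Longrightarrow> v \<noteq> a5 \<Longrightarrow> False"
  using in_C_three[OF cyc eC(4) eC(2)] neq by blast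

lemma three_a5: "in_C cs (a5, v) \<Longrightarrow> v \<noteq> a4 \<Longrightarrow> v \<noteq> a0 \<Longrightarrow> False"
  using in_C_three[OF cyc eC(5) eC(3)] neq by blast

lemma pentagon_false: "pp \<noteq> 5"
proof
  assume p5: "pp = 5"
  obtain D where lcD: "longest_cycle V E D" and sD: "set D = (set cs - {a4,a5}) \<union> {a1,a2}"
    using D_ex by blast
  have cycD: "is_cycle V E D" using lcD unfolding longest_cycle_def by auto
  define y where "y = hw 2"
  define t where "t = hw 3"
  define x where "x = hw 4"
  have xx: "x = hw (pp - 1)" using p5 x_def by simp
  have e1: "(a4,y) \<in> E" using hwE[of 1] hw01 y_def by (simp add: numeral_eq_Suc)
  have e2: "(y,t) \<in> E" using hwE[of 2] y_def t_def by (simp add: numeral_eq_Suc)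
  have e3: "(t,x) \<in> E" using hwE[of 3] t_def x_def by (simp add: numeral_eq_Suc)
  have e4: "(x,a5) \<in> E" using hwE[of 4] hwper[of 0] hw01 p5 x_def by (simp add: numeral_eq_Suc)
  have e5: "(a4,a5) \<in> E" using fE by simp
  have dd: "y \<noteq> t" "y \<noteq> x" "t \<noteq> x" "a4 \<noteq> y" "a4 \<noteq> t" "a4 \<noteq> x" "a5 \<noteq> y" "a5 \<noteq> t" "a5 \<noteq> x" "a4 \<noteq> a5"
    using hwd[of 2 3] hwd[of 2 4] hwd[of 3 4] hwd[of 1 2] hwd[of 1 3] hwd[of 1 4] hwd[of 0 2] hwd[of 0 3] hwd[of 0 4] hwd[of 0 1]
    hw01 p5 unfolding y_def t_def x_def by auto
  have y12: "y \<noteq> a1" "y \<noteq> a2" using not_y1 not_y2 y_def by auto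
  have x12: "x \<noteq> a1" "x \<noteq> a2" using not_x1 not_x2 xx by auto
  have a45D: "a4 \<notin> set D" "a5 \<notin> set D" using sD neq by auto
  have Vs: "y \<in> V" "t \<in> V" "x \<in> V" "a4 \<in> V" "a5 \<in> V" using e1 e2 e3 e4 EV[OF gc] by blast+
  have toCs: "\<And>v. v \<notin> set D \<Longrightarrow> v \<noteq> a4 \<Longrightarrow> v \<noteq> a5 \<Longrightarrow> v \<notin> set cs" using sD by auto
  show False
  proof (cases "y \<in> set D"; cases "x \<in> set D")
    assume yD: "y \<in> set D" and xD: "x \<in> set D"
    have i1: "in_C D (y,t)" by (rule dg[OF cycD yD _ a45D(1)]) (use e1 e2 Es dd in auto)
    have i2: "in_C D (x,t)" by (rule dg[OF cycD xD _ a45D(2)]) (use e3 e4 Es dd in auto)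
    show False
      by (rule R2[OF lcD sE' i1 inCs[OF i2] dd(2), of "[a4,a5]"])
         (use a45D dd Vs e1 e5 e4 Es in \<open>auto simp: pe_def\<close>)
  next
    assume yD: "y \<notin> set D" and xD: "x \<in> set D"
    have i2: "in_C D (x,t)" by (rule dg[OF cycD xD _ a45D(2)]) (use e3 e4 Es dd in auto)
    show False
      by (rule R1[OF lcD sE' inCs[OF i2], of "[y,a4,a5]"])
         (use a45D yD dd Vs e1 e2 e5 e4 Es in \<open>auto simp: pe_def\<close>)
  next
    assume yD: "y \<in> set D" and xD: "x \<notin> set D"
    have i1: "in_C D (y,t)" by (rule dg[OF cycD yD _ a45D(1)]) (use e1 e2 Es dd in auto)
    show False
      by (rule R1[OF lcD sE' i1, of "[a4,a5,x]"])
         (use a45D xD dd Vs e1 e3 e5 e4 Es in \<open>auto simp: pe_def\<close>)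
  next
    assume yD: "y \<notin> set D" and xD: "x \<notin> set D"
    show False
    proof (cases "t \<in> set D")
      case True
      have "in_C D (t,x)" by (rule dg[OF cycD True _ yD]) (use e2 e3 Es dd in auto)
      then show False using xD inCset by metis
    next
      case False
      have "y \<notin> set cs" "t \<notin> set cs" "x \<notin> set cs" using toCs yD xD False dd by auto
      then show False
        by (intro R1[OF lc sE' eC(2), of "[y,t,x]"])
           (use dd Vs e1 e2 e3 e4 Es in \<open>auto simp: pe_def\<close>)
    qed
  qed
qed

lemma hexagon_black: "pp = 6 \<and> hw 2 \<in> set cs \<and> hw 3 \<in> set cs \<and> hw 4 \<in> set cs \<and> hw 5 \<in> set cs"
proof -
  have p6: "pp = 6" using pp56 pentagon_false by simp
  obtain D where lcD: "longest_cycle V E D" and sD: "set D = (set cs - {a4,a5}) \<union> {a1,a2}"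
    using D_ex by blast
  have cycD: "is_cycle V E D" using lcD unfolding longest_cycle_def by auto
  define y where "y = hw 2"
  define s where "s = hw 3"
  define t where "t = hw 4"
  define x where "x = hw 5"
  have xx: "x = hw (pp - 1)" using p6 x_def by simp
  have e1: "(a4,y) \<in> E" using hwE[of 1] hw01 y_def by (simp add: numeral_eq_Suc)
  have e2: "(y,s) \<in> E" using hwE[of 2] y_def s_def by (simp add: numeral_eq_Suc)
  have e3: "(s,t) \<in> E" using hwE[of 3] s_def t_def by (simp add: numeral_eq_Suc)
  have e6: "(t,x) \<in> E" using hwE[of 4] t_def x_def by (simp add: numeral_eq_Suc)
  have e4: "(x,a5) \<in> E" using hwE[of 5] hwper[of 0] hw01 p6 x_def by (simp add: numeral_eq_Suc)
  have e5: "(a4,a5) \<in> E" using fE by simp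
  have dd: "y \<noteq> s" "y \<noteq> t" "y \<noteq> x" "s \<noteq> t" "s \<noteq> x" "t \<noteq> x"
    "a4 \<noteq> y" "a4 \<noteq> s" "a4 \<noteq> t" "a4 \<noteq> x" "a5 \<noteq> y" "a5 \<noteq> s" "a5 \<noteq> t" "a5 \<noteq> x" "a4 \<noteq> a5"
    using hwd[of 2 3] hwd[of 2 4] hwd[of 2 5] hwd[of 3 4] hwd[of 3 5] hwd[of 4 5]
      hwd[of 1 2] hwd[of 1 3] hwd[of 1 4] hwd[of 1 5] hwd[of 0 2] hwd[of 0 3] hwd[of 0 4] hwd[of 0 5] hwd[of 0 1]
    hw01 p6 unfolding y_def s_def t_def x_def by auto
  have y12: "y \<noteq> a1" "y \<noteq> a2" using not_y1 not_y2 y_def by auto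
  have x12: "x \<noteq> a1" "x \<noteq> a2" using not_x1 not_x2 xx by auto
  have y35: "y \<noteq> a3" using yfacts y_def by auto
  have x04: "x \<noteq> a0" using xfacts xx by auto
  have a45D: "a4 \<notin> set D" "a5 \<notin> set D" using sD neq by auto
  have Vs: "y \<in> V" "s \<in> V" "t \<in> V" "x \<in> V" using e1 e2 e3 e4 EV[OF gc] by blast+
  have toCs: "\<And>v. v \<notin> set D \<Longrightarrow> v \<noteq> a4 \<Longrightarrow> v \<noteq> a5 \<Longrightarrow> v \<notin> set cs" using sD by auto
  have fromD: "\<And>v. v \<in> set D \<Longrightarrow> v \<noteq> a1 \<Longrightarrow> v \<noteq> a2 \<Longrightarrow> v \<in> set cs" using sD by auto
  have blk: "y \<in> set cs \<and> s \<in> set cs \<and> t \<in> set cs \<and> x \<in> set cs"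
  proof (cases "y \<in> set D"; cases "x \<in> set D")
    assume yD: "y \<in> set D" and xD: "x \<in> set D"
    have i1: "in_C D (y,s)" by (rule dg[OF cycD yD _ a45D(1)]) (use e1 e2 Es dd in auto)
    have i2: "in_C D (x,t)" by (rule dg[OF cycD xD _ a45D(2)]) (use e6 e4 Es dd in auto)
    have yC: "y \<in> set cs" using fromD[OF yD] y12 by simp
    have xC: "x \<in> set cs" using fromD[OF xD] x12 by simp
    have sC: "s \<in> set cs"
    proof (rule ccontr)
      assume sC: "s \<notin> set cs"
      have "in_C cs (y,a4)" by (rule dg[OF cyc yC e2 sC]) (use e1 Es dd in auto)
      then show False using three_a4[OF inCs] y35 dd by metis
    qed
    have tC: "t \<in> set cs"
    proof (rule ccontr)
      assume tC: "t \<notin> set cs"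
      have "in_C cs (x,a5)" by (rule dg[OF cyc xC _ tC]) (use e6 e4 Es dd in auto)
      then show False using three_a5[OF inCs] x04 dd by metis
    qed
    show ?thesis using yC sC tC xC by simp
  next
    assume yD: "y \<notin> set D" and xD: "x \<in> set D"
    have i2: "in_C D (x,t)" by (rule dg[OF cycD xD _ a45D(2)]) (use e6 e4 Es dd in auto)
    show ?thesis
    proof (cases "s \<in> set D")
      case True
      have i3: "in_C D (s,t)" by (rule dg[OF cycD True _ yD]) (use e2 e3 Es dd in auto)
      show ?thesis
        by (rule FalseE, rule R2[OF lcD sE' i3 inCs[OF i2] dd(5), of "[y,a4,a5]"])
           (use a45D yD dd Vs uV e1 e2 e5 e4 Es in \<open>auto simp: pe_def\<close>)
    next
      case False
      show ?thesis
        by (rule FalseE, rule R1[OF lcD sE' inCs[OF i2], of "[s,y,a4,a5]"])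
           (use a45D yD False dd Vs uV e1 e2 e3 e5 e4 Es in \<open>auto simp: pe_def\<close>)
    qed
  next
    assume yD: "y \<in> set D" and xD: "x \<notin> set D"
    have i1: "in_C D (y,s)" by (rule dg[OF cycD yD _ a45D(1)]) (use e1 e2 Es dd in auto)
    show ?thesis
    proof (cases "t \<in> set D")
      case True
      have i3: "in_C D (t,s)" by (rule dg[OF cycD True _ xD]) (use e6 e3 Es dd in auto)
      show ?thesis
        by (rule FalseE, rule R2[OF lcD sE' i1 inCs[OF i3] dd(2), of "[a4,a5,x]"])
           (use a45D xD dd Vs uV e1 e6 e5 e4 Es in \<open>auto simp: pe_def\<close>)
    next
      case False
      show ?thesis
        by (rule FalseE, rule R1[OF lcD sE' i1, of "[a4,a5,x,t]"])
           (use a45D xD False dd Vs uV e1 e3 e6 e5 e4 Es in \<open>auto simp: pe_def\<close>)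
    qed
  next
    assume yD: "y \<notin> set D" and xD: "x \<notin> set D"
    show ?thesis
    proof (cases "s \<in> set D"; cases "t \<in> set D")
      assume sD': "s \<in> set D" and tD: "t \<in> set D"
      have i3: "in_C D (s,t)" by (rule dg[OF cycD sD' _ yD]) (use e2 e3 Es dd in auto)
      show ?thesis
        by (rule FalseE, rule R1[OF lcD sE' i3, of "[y,a4,a5,x]"])
           (use a45D xD yD dd Vs uV e1 e2 e6 e5 e4 Es in \<open>auto simp: pe_def\<close>)
    next
      assume sD': "s \<notin> set D" and tD: "t \<in> set D"
      have "in_C D (t,s)" by (rule dg[OF cycD tD _ xD]) (use e6 e3 Es dd in auto)
      then show ?thesis using sD' inCset by metis
    next
      assume sD': "s \<in> set D" and tD: "t \<notin> set D"
      have "in_C D (s,t)" by (rule dg[OF cycD sD' _ yD]) (use e2 e3 Es dd in auto)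
      then show ?thesis using tD inCset by metis
    next
      assume sD': "s \<notin> set D" and tD: "t \<notin> set D"
      have nc: "y \<notin> set cs" "s \<notin> set cs" "t \<notin> set cs" "x \<notin> set cs" using toCs yD xD sD' tD dd by auto
      show ?thesis
        by (rule FalseE, rule R1[OF lc sE' eC(2), of "[y,s,t,x]"])
           (use nc dd Vs uV e1 e2 e3 e6 e4 Es in \<open>auto simp: pe_def\<close>)
    qed
  qed
  then show ?thesis using p6 y_def s_def t_def x_def by simp
qed

lemma h_black: "black_face cs (face_of rot dh)" "card (face_of rot dh) = 6"
proof -
  have hb: "pp = 6" "hw 2 \<in> set cs" "hw 3 \<in> set cs" "hw 4 \<in> set cs" "hw 5 \<in> set cs"
    using hexagon_black by auto
  show "card (face_of rot dh) = 6" using card_face[OF gc dhE] hb(1) unfolding pp_def by simp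
  have "face_of rot dh = (\<lambda>k. (phi rot ^^ k) dh) ` {..<6}" using face_eq[OF gc dhE] hb(1) unfolding pp_def by simp
  then have "face_vertices (face_of rot dh) = hw ` {..<6}"
    unfolding face_vertices_def hw_def wk_def[OF gc] by (simp add: image_image)
  also have "{..<6::nat} = {0,1,2,3,4,5}" by auto
  finally have "face_vertices (face_of rot dh) = {a5,a4,hw 2,hw 3,hw 4,hw 5}" using hw01 by simp
  then have "{v \<in> face_vertices (face_of rot dh). v \<notin> set cs} = {}" using hb inC by auto
  then show "black_face cs (face_of rot dh)" unfolding black_face_def white_count_def by (simp only: card.empty)
qed

definition contrib :: "'a \<times> 'a \<Rightarrow> real" where
  "contrib d = (let prv = (phi rot ^^ 5) d; nxt = phi rot d in
     (if in_C cs prv \<and> in_C cs d \<and> in_C cs nxt then 1/2 else 0) +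
     (if in_C cs d \<and> \<not> in_C cs prv \<and> \<not> in_C cs nxt then 1 else 0))"

lemma prv_char:
  assumes dE: "d \<in> E" and p6: "(phi rot ^^ 6) d = d"
  shows "\<exists>p1. (phi rot ^^ 5) d = (p1, fst d) \<and> rot (fst d) p1 = snd d \<and> (p1, fst d) \<in> E"
proof -
  obtain p1 p2 where pr: "(phi rot ^^ 5) d = (p1,p2)" by (cases "(phi rot ^^ 5) d")
  have "phi rot ((phi rot ^^ 5) d) = d" using p6 by (simp add: numeral_eq_Suc)
  then have "(p2, rot p2 p1) = d" using pr unfolding phi_def by simp
  moreover have "(p1,p2) \<in> E" using fp_E[OF gc dE, of 5] pr by simp
  ultimately show ?thesis using pr by (intro exI[of _ p1]) auto
qed

lemma notC: "in_C cs (a,b) \<Longrightarrow> a \<in> set cs \<and> b \<in> set cs" using in_C_set by fast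

lemma contrib_val:
  assumes dE: "d \<in> E" and p6: "(phi rot ^^ 6) d = d" and rf: "(snd d, fst d) \<in> f"
  shows "contrib d = (if d = (a5,a4) then 1 else 0)"
proof -
  obtain p1 where pv: "(phi rot ^^ 5) d = (p1, fst d)" "rot (fst d) p1 = snd d" "(p1, fst d) \<in> E"
    using prv_char[OF dE p6] by blast
  from rf consider "d = (a1,a0)" | "d = (a2,a1)" | "d = (a3,a2)" | "d = (a4,a3)" | "d = (a5,a4)" | "d = (a0,a5)"
    unfolding f_set by (cases d) auto
  then show ?thesis
  proof cases
    case 1 then have "\<not> in_C cs d" using notC white12 by auto
    then show ?thesis unfolding contrib_def using 1 neq by (simp add: Let_def)
  next
    case 2 then have "\<not> in_C cs d" using notC white12 by auto
    then show ?thesis unfolding contrib_def using 2 neq by (simp add: Let_def)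
  next
    case 3 then have "\<not> in_C cs d" using notC white12 by auto
    then show ?thesis unfolding contrib_def using 3 neq by (simp add: Let_def)
  next
    case 4
    have nx: "in_C cs (phi rot d)"
    proof -
      have b: "rot a3 a4 \<in> nbrs E a3" using rot_in[OF gc uV(4) a5a4(8)] .
      have ne2: "rot a3 a4 \<noteq> a2" using rot_no2[OF gc uV(4) a5a4(7)] rotf by auto
      have "in_C cs (a3, rot a3 a4)" by (rule dg[OF cyc inC(2) _ white12(2)]) (use fE b ne2 Es in \<open>auto simp: nbE\<close>)
      then show ?thesis using 4 by (simp add: phi_def)
    qed
    have pr: "\<not> in_C cs ((phi rot ^^ 5) d)"
    proof
      assume "in_C cs ((phi rot ^^ 5) d)"
      then have ic: "in_C cs (a4, p1)" using pv 4 inCs by simp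
      have "p1 \<noteq> a3" using pv 4 rotf neq by auto
      moreover have "p1 \<noteq> a5" using pv 4 yfacts hw2 by auto
      ultimately show False using three_a4[OF ic] by simp
    qed
    show ?thesis unfolding contrib_def using 4 nx pr neq by (simp add: Let_def)
  next
    case 5
    have dc: "in_C cs d" using 5 eC by simp
    have nx: "\<not> in_C cs (phi rot d)"
    proof
      assume "in_C cs (phi rot d)"
      then have "in_C cs (a4, rot a4 a5)" using 5 by (simp add: phi_def)
      then show False using three_a4 yfacts hw2 by simp
    qed
    have pr: "\<not> in_C cs ((phi rot ^^ 5) d)"
    proof
      assume "in_C cs ((phi rot ^^ 5) d)"
      then have ic: "in_C cs (a5, p1)" using pv 5 inCs by simp
      have "p1 \<noteq> a4" using pv 5 rotf neq by auto
      moreover have "p1 \<noteq> a0"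
      proof
        assume "p1 = a0" then have "rot a5 (rot a5 a4) = a4" using pv 5 rotf by simp
        then show False using rot_no2[OF gc uV(6) a5a4(3)] by simp
      qed
      ultimately show False using three_a5[OF ic] by simp
    qed
    show ?thesis unfolding contrib_def using 5 dc nx pr by (simp add: Let_def)
  next
    case 6
    have nx: "\<not> in_C cs (phi rot d)"
    proof
      assume "in_C cs (phi rot d)"
      then have ic: "in_C cs (a5, rot a5 a0)" using 6 by (simp add: phi_def)
      have "rot a5 a0 \<noteq> a0" using rot_nofix[OF gc uV(6) a5a4(4)] .
      moreover have "rot a5 a0 \<noteq> a4" using rot_no2[OF gc uV(6) a5a4(3)] rotf by auto
      ultimately show False using three_a5[OF ic] by simp
    qed
    have pr: "in_C cs ((phi rot ^^ 5) d)"
    proof -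
      have p1a1: "p1 \<noteq> a1"
      proof
        assume "p1 = a1" then have "rot a0 (rot a0 a5) = a5" using pv 6 rotf by simp
        then show False using rot_no2[OF gc uV(1) a5a4(6)] by simp
      qed
      have pe: "(a0,p1) \<in> E" using pv 6 Es by simp
      have "in_C cs (a0, p1)" by (rule dg[OF cyc inC(1) _ white12(1)]) (use fE pe p1a1 in auto)
      then show ?thesis using pv 6 inCs by simp
    qed
    show ?thesis unfolding contrib_def using 6 nx pr neq by (simp add: Let_def)
  qed
qed

lemma face_rev_iff: "d \<in> E \<Longrightarrow> face_of rot (snd d, fst d) = f \<longleftrightarrow> (snd d, fst d) \<in> f"
proof
  assume "face_of rot (snd d, fst d) = f"
  then show "(snd d, fst d) \<in> f" using self_in_face[OF gc] by metis
next
  assume "(snd d, fst d) \<in> f"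
  then show "face_of rot (snd d, fst d) = f"
    using face_of_mem[OF gc d0E] fdef d0_def by simp
qed

lemma recv_f: assumes gF: "g \<in> faces E rot"
  shows "recv rot cs g f = (if black_face cs g \<and> card g = 6 \<and> (a5,a4) \<in> g then 1 else 0)"
proof (cases "black_face cs g \<and> card g = 6")
  case False then show ?thesis unfolding recv_def by auto
next
  case True
  obtain e where eE: "e \<in> E" and ge: "g = face_of rot e" using gF unfolding faces_def by auto
  have fin: "finite g" using face_fin[OF gc eE] ge by simp
  have trm: "(let prv = (phi rot ^^ 5) d; nxt = phi rot d in
           if face_of rot (snd d, fst d) = f \<and> white_face cs f then
             (if in_C cs prv \<and> in_C cs d \<and> in_C cs nxt then 1/2 else 0) +
             (if in_C cs d \<and> \<not> in_C cs prv \<and> \<not> in_C cs nxt then 1 else 0)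
           else 0) = (if d = (a5,a4) then 1 else (0::real))" if dg': "d \<in> g" for d
  proof -
    have dE: "d \<in> E" using face_sub[OF gc eE] ge dg' by auto
    have "face_of rot d = g" using face_of_mem[OF gc eE] ge dg' by simp
    then have p6: "(phi rot ^^ 6) d = d" using fp_card[OF gc dE] True by simp
    show ?thesis
    proof (cases "(snd d, fst d) \<in> f")
      case True
      then show ?thesis using contrib_val[OF dE p6 True] face_rev_iff[OF dE] wf
        unfolding contrib_def by (simp add: Let_def)
    next
      case False
      have "d \<noteq> (a5,a4)" using False f_set by auto
      then show ?thesis using False face_rev_iff[OF dE] by (simp add: Let_def)
    qed
  qed
  have "recv rot cs g f = (\<Sum>d\<in>g. if d = (a5,a4) then 1 else (0::real))"
    unfolding recv_def using True trm by (simp cong: sum.cong)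
  also have "\<dots> = (if (a5,a4) \<in> g then 1 else 0)" using fin by (simp add: sum.delta)
  finally show ?thesis using True by simp
qed

lemma final: "final_charge E rot cs f = 1"
proof -
  let ?h = "face_of rot dh"
  have finF: "finite (faces E rot)" unfolding faces_def using finE[OF gc] by simp
  have nb: "\<not> black_face cs f" using wf unfolding white_face_def black_face_def by simp
  have s1: "(\<Sum>h\<in>faces E rot. recv rot cs f h) = 0" unfolding recv_def using nb by simp
  have eq: "recv rot cs g f = (if g = ?h then 1 else 0)" if gF: "g \<in> faces E rot" for g
  proof -
    obtain e where eE: "e \<in> E" and ge: "g = face_of rot e" using gF unfolding faces_def by auto
    have "(a5,a4) \<in> g \<longleftrightarrow> g = ?h"
    proof
      assume "(a5,a4) \<in> g"
      then show "g = ?h" using face_of_mem[OF gc eE] ge dh_def by simp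
    next
      assume "g = ?h" then show "(a5,a4) \<in> g" using self_in_face[OF gc] dh_def by simp
    qed
    then show ?thesis using recv_f[OF gF] h_black by auto
  qed
  have "(\<Sum>h\<in>faces E rot. recv rot cs h f) = (\<Sum>h\<in>faces E rot. if h = ?h then 1 else 0)"
    using eq by (rule sum.cong[OF refl])
  also have "\<dots> = 1" using finF hF by (simp add: sum.delta)
  finally have s2: "(\<Sum>h\<in>faces E rot. recv rot cs h f) = 1" .
  have "real (white_count cs f) = 2" using wf unfolding white_face_def by simp
  then show ?thesis unfolding final_charge_def using s1 s2 by simp
qed

end

theorem lemma4:
  fixes V :: "'a set" and E :: "('a \<times> 'a) set" and rot :: "'a \<Rightarrow> 'a \<Rightarrow> 'a"
    and cs :: "'a list" and f :: "('a \<times> 'a) set" and vs :: "'a list"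
  assumes "fullerene V E rot"
    and "longest_cycle V E cs"
    and "f \<in> faces E rot"
    and "white_face cs f"
    and "card f = 6"
    and "length vs = 6"
    and "f = face_of rot (vs ! 0, vs ! 1)"
    and "\<forall>i<6. phi rot (vs ! i, vs ! ((i + 1) mod 6)) = (vs ! ((i + 1) mod 6), vs ! ((i + 2) mod 6))"
    and "in_C cs (vs ! 3, vs ! 4)"
    and "in_C cs (vs ! 4, vs ! 5)"
    and "in_C cs (vs ! 5, vs ! 0)"
  shows "final_charge E rot cs f = 1"
proof -
  have vsd: "vs = [vs!0, vs!1, vs!2, vs!3, vs!4, vs!5]"
    by (rule nth_equalityI) (use assms(6) in \<open>auto simp: less_Suc_eq numeral_eq_Suc\<close>)
  show ?thesis by (rule final[OF assms vsd])
qed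

end
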